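(* Let $n$ be a positive integer that is a multiple of $3$ or a multiple of $4$. Then it is impossible to place $n-1$ queens on $\mathbb{Z}_n^2$ without conflict.
   Context: Queens are placed on distinct fields of the torus board $\mathbb{Z}_n^2$. Two queens at distinct fields $(x,y),(x',y')$ are in conflict iff $x=x'$, or $y=y'$, or $x+y=x'+y'$, or $x-y=x'-y'$ in $\mathbb{Z}_n$. A placement is without conflict if no two queens are in conflict. *)

theory Defs
  imports Main
begin

(* Fields of the torus Z_n^2 are represented by pairs of integers in {0..<n} x {0..<n};
   equality in Z_n is congruence modulo n. *)
definition torus_board :: "nat \<Rightarrow> (int \<times> int) set" where
  "torus_board n = {0..<int n} \<times> {0..<int n}"

definition queens_conflict :: "nat \<Rightarrow> int \<times> int \<Rightarrow> int \<times> int \<Rightarrow> bool" where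
  "queens_conflict n p q \<longleftrightarrow> p \<noteq> q \<and>
     (fst p mod int n = fst q mod int n \<or>
      snd p mod int n = snd q mod int n \<or>
      (fst p + snd p) mod int n = (fst q + snd q) mod int n \<or>
      (fst p - snd p) mod int n = (fst q - snd q) mod int n)"

definition conflict_free :: "nat \<Rightarrow> (int \<times> int) set \<Rightarrow> bool" where
  "conflict_free n Q \<longleftrightarrow> Q \<subseteq> torus_board n \<and>
     (\<forall>p\<in>Q. \<forall>q\<in>Q. \<not> queens_conflict n p q)"

end

theory Submission
  imports Defs
begin

lemma ivl_Suc: "{0..<int (Suc n)} = insert (int n) {0..<int n}" by auto

lemma s1_closed: "2 * (\<Sum>i\<in>{0..<int n}. i) = int n * (int n - 1)"
  apply (induction n)
   apply simp
  apply (subst ivl_Suc)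
  apply (simp add: algebra_simps)
  done

lemma s2_closed: "6 * (\<Sum>i\<in>{0..<int n}. i^2) = int n * (int n - 1) * (2 * int n - 1)"
  apply (induction n)
   apply simp
  apply (subst ivl_Suc)
  apply (simp add: algebra_simps power2_eq_square)
  done

lemma sq_mod_dvd:
  fixes M N z :: int
  assumes "M dvd 2*N" "M dvd N^2"
  shows "M dvd ((z mod N)^2 - z^2)"
proof -
  define t where "t = z div N"
  have "z mod N = z - N*t" unfolding t_def by (simp add: minus_div_mult_eq_mod[symmetric] algebra_simps)
  hence "(z mod N)^2 - z^2 = (2*N) * (- z*t) + N^2 * t^2" by (simp only:) (simp add: algebra_simps power2_eq_square)
  thus ?thesis using assms by (simp add: dvd_add dvd_mult2)
qed

lemma lin_mod_dvd:
  fixes N z :: int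
  shows "N dvd (z mod N - z)"
proof -
  have "z mod N - z = N * (- (z div N))" by (simp add: minus_div_mult_eq_mod[symmetric] algebra_simps)
  thus ?thesis by simp
qed

lemma missing_exists:
  fixes f :: "int \<times> int \<Rightarrow> int"
  assumes "finite Q" "inj_on f Q" "f ` Q \<subseteq> {0..<int n}" "card Q = n - 1" "n > 0"
  shows "\<exists>a\<in>{0..<int n}. f ` Q = {0..<int n} - {a}"
proof -
  have c: "card (f ` Q) = n - 1" using assms by (simp add: card_image)
  have "card ({0..<int n} - f ` Q) = 1"
    using assms(3) c assms(5) by (simp add: card_Diff_subset finite_subset)
  then obtain a where a: "{0..<int n} - f ` Q = {a}" by (auto simp: card_1_singleton_iff)
  hence "a \<in> {0..<int n}" by auto
  moreover have "f ` Q = {0..<int n} - {a}" using a assms(3) by auto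
  ultimately show ?thesis by blast
qed

lemma sum_missing:
  fixes f :: "int \<times> int \<Rightarrow> int"
  and g :: "int \<Rightarrow> int"
  assumes "inj_on f Q" "f ` Q = {0..<N} - {a}" "a \<in> {0..<N}"
  shows "(\<Sum>p\<in>Q. g (f p)) = (\<Sum>i\<in>{0..<N}. g i) - g a"
proof -
  have "(\<Sum>p\<in>Q. g (f p)) = sum g (f ` Q)" using sum.reindex[OF assms(1), of g] by simp
  also have "\<dots> = (\<Sum>i\<in>{0..<N}. g i) - g a" using assms(2,3) by (simp add: sum_diff1 finite_atLeastLessThan_int)
  finally show ?thesis .
qed

lemma key:
  fixes N M a b c d :: int and Q :: "(int \<times> int) set"
  assumes fin: "finite Q" and M2: "M dvd 2*N" and MN: "M dvd N^2"
  and hx: "\<And>g::int\<Rightarrow>int. (\<Sum>p\<in>Q. g (fst p)) = (\<Sum>i\<in>{0..<N}. g i) - g a"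
  and hy: "\<And>g::int\<Rightarrow>int. (\<Sum>p\<in>Q. g (snd p)) = (\<Sum>i\<in>{0..<N}. g i) - g b"
  and hu: "\<And>g::int\<Rightarrow>int. (\<Sum>p\<in>Q. g ((fst p + snd p) mod N)) = (\<Sum>i\<in>{0..<N}. g i) - g c"
  and hv: "\<And>g::int\<Rightarrow>int. (\<Sum>p\<in>Q. g ((fst p - snd p) mod N)) = (\<Sum>i\<in>{0..<N}. g i) - g d"
  shows "M dvd 2*(\<Sum>i\<in>{0..<N}. i^2) + ((\<Sum>i\<in>{0..<N}. i) - 2*b) * (2*(\<Sum>i\<in>{0..<N}. i))"
proof -
  define s1 where "s1 = (\<Sum>i\<in>{0..<N}. i)"
  define s2 where "s2 = (\<Sum>i\<in>{0..<N}. i^2)"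
  have x1: "(\<Sum>p\<in>Q. fst p) = s1 - a" using hx[of "\<lambda>i. i"] s1_def by simp
  have y1: "(\<Sum>p\<in>Q. snd p) = s1 - b" using hy[of "\<lambda>i. i"] s1_def by simp
  have u1: "(\<Sum>p\<in>Q. (fst p + snd p) mod N) = s1 - c" using hu[of "\<lambda>i. i"] s1_def by simp
  have v1: "(\<Sum>p\<in>Q. (fst p - snd p) mod N) = s1 - d" using hv[of "\<lambda>i. i"] s1_def by simp
  have x2: "(\<Sum>p\<in>Q. (fst p)^2) = s2 - a^2" using hx[of "\<lambda>i. i^2"] s2_def by simp
  have y2: "(\<Sum>p\<in>Q. (snd p)^2) = s2 - b^2" using hy[of "\<lambda>i. i^2"] s2_def by simp
  have u2: "(\<Sum>p\<in>Q. ((fst p + snd p) mod N)^2) = s2 - c^2" using hu[of "\<lambda>i. i^2"] s2_def by simp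
  have v2: "(\<Sum>p\<in>Q. ((fst p - snd p) mod N)^2) = s2 - d^2" using hv[of "\<lambda>i. i^2"] s2_def by simp
  have "N dvd (\<Sum>p\<in>Q. (fst p + snd p) mod N - (fst p + snd p))"
    by (rule dvd_sum) (rule lin_mod_dvd)
  also have "(\<Sum>p\<in>Q. (fst p + snd p) mod N - (fst p + snd p)) = (s1 - c) - (s1 - a) - (s1 - b)"
    by (simp add: sum_subtractf sum.distrib u1 x1 y1)
  finally obtain k1 where k1: "(s1 - c) - (s1 - a) - (s1 - b) = N * k1" by (auto elim: dvdE)
  have "N dvd (\<Sum>p\<in>Q. (fst p - snd p) mod N - (fst p - snd p))"
    by (rule dvd_sum) (rule lin_mod_dvd)
  also have "(\<Sum>p\<in>Q. (fst p - snd p) mod N - (fst p - snd p)) = (s1 - d) - (s1 - a) + (s1 - b)"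
    by (simp add: sum_subtractf u1 x1 y1 v1)
  finally obtain k2 where k2: "(s1 - d) - (s1 - a) + (s1 - b) = N * k2" by (auto elim: dvdE)
  have "M dvd (\<Sum>p\<in>Q. (((fst p + snd p) mod N)^2 - (fst p + snd p)^2) + (((fst p - snd p) mod N)^2 - (fst p - snd p)^2))"
    by (rule dvd_sum) (intro dvd_add sq_mod_dvd M2 MN)
  also have "(\<Sum>p\<in>Q. (((fst p + snd p) mod N)^2 - (fst p + snd p)^2) + (((fst p - snd p) mod N)^2 - (fst p - snd p)^2))
     = (\<Sum>p\<in>Q. ((fst p + snd p) mod N)^2 + ((fst p - snd p) mod N)^2 - 2 * (fst p)^2 - 2 * (snd p)^2)"
    by (rule sum.cong) (simp_all add: algebra_simps power2_eq_square)
  also have "\<dots> = (s2 - c^2) + (s2 - d^2) - 2 * (s2 - a^2) - 2 * (s2 - b^2)"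
    by (simp add: sum_subtractf sum.distrib sum_distrib_left[symmetric] u2 v2 x2 y2)
  finally have E: "M dvd (s2 - c^2) + (s2 - d^2) - 2 * (s2 - a^2) - 2 * (s2 - b^2)" .
  have c: "c = a + b - s1 - N*k1" using k1 by simp
  have d: "d = s1 + a - b - N*k2" using k2 by simp
  define R where "R = (2*N) * (- k1 * (a + b - s1) - k2 * (s1 + a - b)) + N^2 * (k1^2 + k2^2)"
  have MR: "M dvd R" unfolding R_def using M2 MN by (simp add: dvd_add dvd_mult2)
  have "2*s2 + (s1 - 2*b) * (2*s1) = - ((s2 - c^2) + (s2 - d^2) - 2 * (s2 - a^2) - 2 * (s2 - b^2)) - R"
    unfolding R_def c d by (simp add: algebra_simps power2_eq_square)
  also have "M dvd \<dots>" by (rule dvd_diff[OF _ MR]) (simp only: dvd_minus_iff E)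
  finally show ?thesis unfolding s1_def s2_def .
qed

lemma get_missing:
  fixes f :: "int \<times> int \<Rightarrow> int"
  assumes "finite Q" "inj_on f Q" "f ` Q \<subseteq> {0..<int n}" "card Q = n - 1" "n > 0"
  shows "\<exists>a. \<forall>g::int\<Rightarrow>int. (\<Sum>p\<in>Q. g (f p)) = (\<Sum>i\<in>{0..<int n}. g i) - g a"
  using missing_exists[OF assms] sum_missing[OF assms(2)] by blast

theorem mainTheorem6:
  fixes n :: nat
  assumes "n > 0" and "3 dvd n \<or> 4 dvd n"
  shows "\<not> (\<exists>Q. card Q = n - 1 \<and> conflict_free n Q)"
proof
  assume "\<exists>Q. card Q = n - 1 \<and> conflict_free n Q"
  then obtain Q where cQ: "card Q = n - 1" and cf: "conflict_free n Q" by blast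
  define N where "N = int n"
  have Npos: "N > 0" using assms(1) N_def by simp
  have sub: "Q \<subseteq> {0..<N} \<times> {0..<N}" using cf unfolding conflict_free_def torus_board_def N_def by simp
  have fin: "finite Q" by (rule finite_subset[OF sub]) simp
  have nc: "\<And>p q. p \<in> Q \<Longrightarrow> q \<in> Q \<Longrightarrow> p \<noteq> q \<Longrightarrow>
      fst p mod N \<noteq> fst q mod N \<and> snd p mod N \<noteq> snd q mod N \<and>
      (fst p + snd p) mod N \<noteq> (fst q + snd q) mod N \<and> (fst p - snd p) mod N \<noteq> (fst q - snd q) mod N"
    using cf unfolding conflict_free_def queens_conflict_def N_def by blast
  have bnd: "\<And>p. p \<in> Q \<Longrightarrow> 0 \<le> fst p \<and> fst p < N \<and> 0 \<le> snd p \<and> snd p < N" using sub by auto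
  have "inj_on fst Q"
  proof (rule inj_onI, rule ccontr)
    fix p q assume "p \<in> Q" "q \<in> Q" "fst p = fst q" "p \<noteq> q"
    thus False using nc[of p q] by simp
  qed
  moreover have "fst ` Q \<subseteq> {0..<int n}" using bnd N_def by auto
  ultimately obtain a where hx: "\<And>g::int\<Rightarrow>int. (\<Sum>p\<in>Q. g (fst p)) = (\<Sum>i\<in>{0..<N}. g i) - g a"
    using get_missing[OF fin _ _ cQ assms(1)] N_def by blast
  have "inj_on snd Q"
  proof (rule inj_onI, rule ccontr)
    fix p q assume "p \<in> Q" "q \<in> Q" "snd p = snd q" "p \<noteq> q"
    thus False using nc[of p q] by simp
  qed
  moreover have "snd ` Q \<subseteq> {0..<int n}" using bnd N_def by auto
  ultimately obtain b where hy: "\<And>g::int\<Rightarrow>int. (\<Sum>p\<in>Q. g (snd p)) = (\<Sum>i\<in>{0..<N}. g i) - g b"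
    using get_missing[OF fin _ _ cQ assms(1)] N_def by blast
  have "inj_on (\<lambda>p. (fst p + snd p) mod N) Q"
  proof (rule inj_onI, rule ccontr)
    fix p q assume "p \<in> Q" "q \<in> Q" "(fst p + snd p) mod N = (fst q + snd q) mod N" "p \<noteq> q"
    thus False using nc[of p q] by simp
  qed
  moreover have "(\<lambda>p. (fst p + snd p) mod N) ` Q \<subseteq> {0..<int n}" using Npos N_def by auto
  ultimately obtain c where hu: "\<And>g::int\<Rightarrow>int. (\<Sum>p\<in>Q. g ((fst p + snd p) mod N)) = (\<Sum>i\<in>{0..<N}. g i) - g c"
    using get_missing[OF fin _ _ cQ assms(1)] N_def by blast
  have "inj_on (\<lambda>p. (fst p - snd p) mod N) Q"
  proof (rule inj_onI, rule ccontr)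
    fix p q assume "p \<in> Q" "q \<in> Q" "(fst p - snd p) mod N = (fst q - snd q) mod N" "p \<noteq> q"
    thus False using nc[of p q] by simp
  qed
  moreover have "(\<lambda>p. (fst p - snd p) mod N) ` Q \<subseteq> {0..<int n}" using Npos N_def by auto
  ultimately obtain d where hv: "\<And>g::int\<Rightarrow>int. (\<Sum>p\<in>Q. g ((fst p - snd p) mod N)) = (\<Sum>i\<in>{0..<N}. g i) - g d"
    using get_missing[OF fin _ _ cQ assms(1)] N_def by blast
  define s1 where "s1 = (\<Sum>i\<in>{0..<N}. i)"
  define s2 where "s2 = (\<Sum>i\<in>{0..<N}. i^2)"
  have S1: "2 * s1 = N * (N - 1)" unfolding s1_def N_def by (rule s1_closed)
  have S2: "6 * s2 = N * (N - 1) * (2 * N - 1)" unfolding s2_def N_def by (rule s2_closed)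
  have K: "\<And>M. M dvd 2*N \<Longrightarrow> M dvd N^2 \<Longrightarrow> M dvd 2*s2 + (s1 - 2*b) * (2*s1)"
    unfolding s1_def s2_def by (rule key[OF fin _ _ hx hy hu hv])
  show False
    using assms(2)
  proof
    assume "3 dvd n"
    then obtain m where m: "N = 3 * m" unfolding N_def by (metis dvd_def of_nat_mult of_nat_numeral)
    have mpos: "m \<noteq> 0" using m Npos by simp
    have "N dvd 2*s2 + (s1 - 2*b) * (2*s1)" by (rule K) (simp_all add: power2_eq_square)
    moreover have "N dvd (s1 - 2*b) * (2*s1)" unfolding S1 by simp
    ultimately have "N dvd 2*s2" using dvd_add_left_iff by blast
    hence h: "3 * N dvd 3 * (2 * s2)" by (rule mult_dvd_mono[OF dvd_refl])
    have e: "3*(2*s2) = (3*m)*((3*m-1)*(6*m-1))" using S2 m by (simp add: algebra_simps)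
    have e2: "3*N = (3*m)*3" using m by simp
    have "(3*m) * 3 dvd (3*m) * ((3*m-1)*(6*m-1))" using h unfolding e e2 .
    hence "3 dvd (3*m-1)*(6*m-1)" using mpos by (simp only: dvd_mult_cancel_left) simp
    moreover have "(3*m-1)*(6*m-1) = 3 * (6*m*m - 3*m) + 1" by (simp add: algebra_simps)
    ultimately show False by presburger
  next
    assume "4 dvd n"
    then obtain m where m: "N = 4 * m" unfolding N_def by (metis dvd_def of_nat_mult of_nat_numeral)
    have mpos: "m \<noteq> 0" using m Npos by simp
    have "2*N dvd 2*s2 + (s1 - 2*b) * (2*s1)" by (rule K) (simp_all add: power2_eq_square m)
    moreover have s1e: "s1 = 2 * m * (4*m - 1)" using S1 m by (simp add: algebra_simps)
    have "(s1 - 2*b) * (2*s1) = (2*N) * ((m*(4*m-1) - b) * (N - 1))" unfolding s1e m by (simp add: algebra_simps)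
    hence "2*N dvd (s1 - 2*b) * (2*s1)" by simp
    ultimately have "2*N dvd 2*s2" using dvd_add_left_iff by blast
    hence h: "3 * (2*N) dvd 3 * (2 * s2)" by (rule mult_dvd_mono[OF dvd_refl])
    have e: "3*(2*s2) = (4*m)*((4*m-1)*(8*m-1))" using S2 m by (simp add: algebra_simps)
    have e2: "3*(2*N) = (4*m)*6" using m by simp
    have "(4*m) * 6 dvd (4*m) * ((4*m-1)*(8*m-1))" using h unfolding e e2 .
    hence "6 dvd (4*m-1)*(8*m-1)" using mpos by (simp only: dvd_mult_cancel_left) simp
    moreover have "(4*m-1)*(8*m-1) = 2 * (16*m*m - 6*m) + 1" by (simp add: algebra_simps)
    ultimately show False by presburger
  qed
qed

end
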